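(* Let $\mathcal I\neq\mathrm{Fin}$ be an ideal on $\mathbb N$ for which there exists an infinite set $E\subset\mathbb N$ such that: (I) no infinite subset of $E$ belongs to $\mathcal I$; (II) $\sup\{e_{n+1}-e_n\colon n\in\mathbb N\}<\infty$, where $(e_n)_{n\in\mathbb N}$ is the increasing enumeration of $E$. Then for each normed space $X$ and every divergent series $\sum_n x_n$ in $X$ which is $\mathcal I$-convergent, the set $$A(\mathcal I):=\left\{t \in \{0,1\}^{\mathbb N} \colon \sum_n t(n)x_n \text{ is } \mathcal I\text{-convergent}\right\}$$ satisfies $\lambda(A(\mathcal I))=0$.
   Context: $\mathbb N=\{1,2,\dots\}$; $\mathrm{Fin}$ denotes the ideal of finite subsets of $\mathbb N$. An ideal on $\mathbb N$ is a family $\mathcal I\subset\mathcal P(\mathbb N)$ closed under finite unions and subsets, with $\mathbb N\notin\mathcal I$ and $\mathrm{Fin}\subset\mathcal I$. A sequence $(y_n)$ in a normed space is $\mathcal I$-convergent to $y$ if $\{n:\|y_n-y\|>\varepsilon\}\in\mathcal I$ for every $\varepsilon>0$; a series is $\mathcal I$-convergent if its sequence of partial sums is $\mathcal I$-convergent to some element. $\lambda$ is the product probability measure on $\{0,1\}^{\mathbb N}$ generated by the measure giving mass $1/2$ to each of $0$ and $1$. Normed spaces are over $\mathbb R$. *)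

theory Defs
  imports "HOL-Probability.Probability"
begin

text \<open>Ideals on the index set (natural numbers, 0-based reindexing of {1,2,...}).\<close>
definition is_ideal :: "nat set set \<Rightarrow> bool" where
  "is_ideal I \<longleftrightarrow>
     (\<forall>A\<in>I. \<forall>B\<in>I. A \<union> B \<in> I) \<and>
     (\<forall>A\<in>I. \<forall>B. B \<subseteq> A \<longrightarrow> B \<in> I) \<and>
     UNIV \<notin> I \<and>
     {A. finite A} \<subseteq> I"

definition Fin_ideal :: "nat set set" where
  "Fin_ideal = {A. finite A}"

definition I_convergent_to :: "nat set set \<Rightarrow> (nat \<Rightarrow> 'a::real_normed_vector) \<Rightarrow> 'a \<Rightarrow> bool" where
  "I_convergent_to I y L \<longleftrightarrow> (\<forall>\<epsilon>>0. {n. norm (y n - L) > \<epsilon>} \<in> I)"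

definition I_convergent :: "nat set set \<Rightarrow> (nat \<Rightarrow> 'a::real_normed_vector) \<Rightarrow> bool" where
  "I_convergent I y \<longleftrightarrow> (\<exists>L. I_convergent_to I y L)"

definition partial_sums :: "(nat \<Rightarrow> 'a::real_normed_vector) \<Rightarrow> nat \<Rightarrow> 'a" where
  "partial_sums x n = (\<Sum>i\<le>n. x i)"

definition series_I_convergent :: "nat set set \<Rightarrow> (nat \<Rightarrow> 'a::real_normed_vector) \<Rightarrow> bool" where
  "series_I_convergent I x \<longleftrightarrow> I_convergent I (partial_sums x)"

text \<open>The Cantor measure lambda on {0,1}^N (0/1 encoded as False/True).\<close>
definition cantor_measure :: "(nat \<Rightarrow> bool) measure" where
  "cantor_measure = PiM UNIV (\<lambda>_. measure_pmf (bernoulli_pmf (1/2)))"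

definition A_set :: "nat set set \<Rightarrow> (nat \<Rightarrow> 'a::real_normed_vector) \<Rightarrow> (nat \<Rightarrow> bool) set" where
  "A_set I x = {t. series_I_convergent I (\<lambda>n. (if t n then 1 else 0) *\<^sub>R x n)}"

end

theory Submission
  imports Defs
begin

lemma space_cantor[simp]: "space cantor_measure = UNIV"
  by (simp add: cantor_measure_def space_PiM)

lemma prob_cantor: "prob_space cantor_measure"
  unfolding cantor_measure_def by (rule prob_space_PiM) (simp add: prob_space_measure_pmf)

lemma pps: "product_prob_space (\<lambda>_::nat. measure_pmf (bernoulli_pmf (1/2)))"
  by (rule product_prob_spaceI) (simp add: prob_space_measure_pmf)

lemma flip_meas: "(\<lambda>t. t(i0 := \<not> t i0)) \<in> measurable cantor_measure cantor_measure"
  unfolding cantor_measure_def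
  by (rule measurable_PiM_single') (auto simp: space_PiM)

lemma bern_not: "emeasure (measure_pmf (bernoulli_pmf (1/2))) (Not ` F) = emeasure (measure_pmf (bernoulli_pmf (1/2))) F"
proof -
  have e: "emeasure (measure_pmf (bernoulli_pmf (1/2))) S = ennreal (real (card S) / 2)" for S :: "bool set"
    using emeasure_measure_pmf_finite[of S "bernoulli_pmf (1/2)"] by simp
  have "card (Not ` F) = card F" by (rule card_image) (auto simp: inj_on_def)
  then show ?thesis by (simp add: e)
qed

lemma flip_pres: "distr cantor_measure cantor_measure (\<lambda>t. t(i0 := \<not> t i0)) = cantor_measure"
proof -
  interpret product_prob_space "\<lambda>_::nat. measure_pmf (bernoulli_pmf (1/2))" UNIV by (rule pps)
  let ?M = "\<lambda>_::nat. measure_pmf (bernoulli_pmf (1/2))"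
  let ?f = "\<lambda>t::nat\<Rightarrow>bool. t(i0 := \<not> t i0)"
  show ?thesis unfolding cantor_measure_def
  proof (rule PiM_eq)
    show "sets (distr (Pi\<^sub>M UNIV ?M) (Pi\<^sub>M UNIV ?M) ?f) = sets (Pi\<^sub>M UNIV ?M)" by simp
  next
    fix J F assume J: "finite J" "J \<subseteq> (UNIV::nat set)" and F: "\<And>j. j \<in> J \<Longrightarrow> F j \<in> sets (?M j)"
    define F' where "F' = (\<lambda>j. if j = i0 then Not ` F j else F j)"
    have pre: "?f -` prod_emb UNIV ?M J (Pi\<^sub>E J F) \<inter> space (Pi\<^sub>M UNIV ?M) = prod_emb UNIV ?M J (Pi\<^sub>E J F')"
      apply (auto simp: prod_emb_def space_PiM PiE_iff F'_def split: if_splits)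
         subgoal for x by (rule image_eqI[of _ Not "\<not> x i0"]) auto
        apply blast
       apply force
      apply blast
      done
    have "emeasure (distr (Pi\<^sub>M UNIV ?M) (Pi\<^sub>M UNIV ?M) ?f) (prod_emb UNIV ?M J (Pi\<^sub>E J F))
        = emeasure (Pi\<^sub>M UNIV ?M) (?f -` prod_emb UNIV ?M J (Pi\<^sub>E J F) \<inter> space (Pi\<^sub>M UNIV ?M))"
      apply (rule emeasure_distr)
      using flip_meas[unfolded cantor_measure_def] apply simp
      using J F by (intro sets_PiM_I) auto
    also have "\<dots> = (\<Prod>j\<in>J. emeasure (?M j) (F' j))"
      unfolding pre using J by (intro emeasure_PiM_emb) auto
    also have "\<dots> = (\<Prod>j\<in>J. emeasure (?M j) (F j))"
      by (rule prod.cong) (auto simp: F'_def bern_not)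
    finally show "emeasure (distr (Pi\<^sub>M UNIV ?M) (Pi\<^sub>M UNIV ?M) ?f) (prod_emb UNIV ?M J (Pi\<^sub>E J F)) = (\<Prod>j\<in>J. emeasure (?M j) (F j))" .
  qed
qed

lemma comp_meas: "(\<lambda>t. t k) \<in> measurable cantor_measure (count_space UNIV)"
    unfolding cantor_measure_def
    using measurable_component_singleton[of k UNIV "\<lambda>_. measure_pmf (bernoulli_pmf (1/2))"]
    by (simp add: measurable_pmf_measure2)

lemma local_meas:
  assumes W: "finite W" and loc: "\<And>t. P t = P (restrict t W)"
  shows "{t. P t} \<in> sets cantor_measure"
proof -
  have [measurable]: "(\<lambda>t. t k) \<in> measurable cantor_measure (count_space UNIV)" for k
    by (rule comp_meas)
  have pm: "{t \<in> space cantor_measure. \<forall>k\<in>W. t k = s k} \<in> sets cantor_measure" for s :: "nat \<Rightarrow> bool"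
    using W by measurable
  let ?S = "{s \<in> PiE W (\<lambda>_. UNIV::bool set). P s}"
  have fin: "finite ?S" using W by (intro finite_subset[OF _ finite_PiE[of W "\<lambda>_. UNIV::bool set"]]) auto
  have eq: "{t. P t} = (\<Union>s\<in>?S. {t \<in> space cantor_measure. \<forall>k\<in>W. t k = s k})"
  proof (intro equalityI subsetI)
    fix t assume "t \<in> {t. P t}"
    then have "P t" by simp
    then show "t \<in> (\<Union>s\<in>?S. {t \<in> space cantor_measure. \<forall>k\<in>W. t k = s k})"
      using loc[of t] by (intro UN_I[of "restrict t W"]) auto
  next
    fix t assume "t \<in> (\<Union>s\<in>?S. {t \<in> space cantor_measure. \<forall>k\<in>W. t k = s k})"
    then obtain s where "s \<in> ?S" "\<forall>k\<in>W. t k = s k" by auto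
    then have "restrict t W = s" by (auto simp: PiE_iff restrict_def fun_eq_iff extensional_def)
    with \<open>s \<in> ?S\<close> loc[of t] show "t \<in> {t. P t}" by auto
  qed
  show ?thesis unfolding eq using fin pm by (intro sets.finite_UN) auto
qed

lemma bad_meas:
  fixes x :: "nat \<Rightarrow> 'a::real_normed_vector"
  assumes "finite W"
  shows "{t. norm (\<Sum>k\<in>W. (if t k then 1 else 0) *\<^sub>R x k) < d} \<in> sets cantor_measure"
  by (rule local_meas[OF assms]) (auto intro!: arg_cong[where f="\<lambda>v. norm v < d"] sum.cong)

definition bsum :: "(nat \<Rightarrow> 'a::real_normed_vector) \<Rightarrow> nat set \<Rightarrow> (nat \<Rightarrow> bool) \<Rightarrow> 'a" where
  "bsum x W t = (\<Sum>k\<in>W. (if t k then 1 else 0) *\<^sub>R x k)"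

lemma bsum_cong: "(\<And>k. k \<in> W \<Longrightarrow> t k = t' k) \<Longrightarrow> bsum x W t = bsum x W t'"
  unfolding bsum_def by (intro sum.cong) auto

lemma bsum_flip:
  assumes "finite W" "i \<in> W"
  shows "bsum x W (t(i := \<not> t i)) - bsum x W t = ((if t i then -1 else 1)::real) *\<^sub>R x i"
proof -
  have "bsum x W s = (if s i then 1 else 0) *\<^sub>R x i + bsum x (W - {i}) s" for s
    unfolding bsum_def using assms by (simp add: sum.remove)
  moreover have "bsum x (W - {i}) (t(i := \<not> t i)) = bsum x (W - {i}) t"
    by (rule bsum_cong) auto
  ultimately show ?thesis by (simp add: algebra_simps)
qed

lemma halving:
  fixes x :: "nat \<Rightarrow> 'a::real_normed_vector" and W :: "nat \<Rightarrow> nat set" and g :: "nat \<Rightarrow> nat"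
  assumes finW: "\<And>j. finite (W j)" and gin: "\<And>j. g j \<in> W j"
    and gout: "\<And>j j'. j \<noteq> j' \<Longrightarrow> g j \<notin> W j'" and big: "\<And>j. norm (x (g j)) \<ge> \<delta>"
    and J: "finite J"
  shows "{t. \<forall>j\<in>J. norm (bsum x (W j) t) < \<delta>/2} \<in> sets cantor_measure \<and>
     measure cantor_measure {t. \<forall>j\<in>J. norm (bsum x (W j) t) < \<delta>/2} \<le> (1/2)^card J"
  using J
proof (induction J rule: finite_induct)
  case empty
  interpret P: prob_space cantor_measure by (rule prob_cantor)
  show ?case using P.prob_space sets.top[of cantor_measure] by simp
next
  case (insert j J)
  interpret P: prob_space cantor_measure by (rule prob_cantor)
  define C where "C = {t. \<forall>j\<in>J. norm (bsum x (W j) t) < \<delta>/2}"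
  define X where "X = {t. \<forall>j\<in>insert j J. norm (bsum x (W j) t) < \<delta>/2}"
  define \<phi> where "\<phi> = (\<lambda>t::nat\<Rightarrow>bool. t(g j := \<not> t (g j)))"
  define Y where "Y = \<phi> -` X \<inter> space cantor_measure"
  have Xs: "X \<in> sets cantor_measure"
    unfolding X_def
    apply (rule local_meas[of "\<Union>i\<in>insert j J. W i"])
    using insert finW apply auto[1]
    apply (intro ball_cong refl arg_cong[where f="\<lambda>v. norm v < \<delta> / 2"] bsum_cong)
    apply auto
    done
  have Cs: "C \<in> sets cantor_measure" and Cm: "measure cantor_measure C \<le> (1/2)^card J"
    using insert.IH unfolding C_def by auto
  have Ys: "Y \<in> sets cantor_measure"
    unfolding Y_def \<phi>_def by (rule measurable_sets[OF flip_meas Xs])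
  have mY: "measure cantor_measure Y = measure cantor_measure X"
    using measure_distr[OF flip_meas Xs, of "g j"] unfolding flip_pres Y_def \<phi>_def by simp
  have XC: "X \<subseteq> C" unfolding X_def C_def by auto
  have YC: "Y \<subseteq> C"
  proof
    fix t assume "t \<in> Y"
    then have "\<phi> t \<in> X" by (simp add: Y_def)
    show "t \<in> C" unfolding C_def
    proof safe
      fix j' assume "j' \<in> J"
      then have "j' \<noteq> j" using insert by auto
      then have "g j \<notin> W j'" using gout by auto
      then have "bsum x (W j') (\<phi> t) = bsum x (W j') t"
        unfolding \<phi>_def by (intro bsum_cong) auto
      then show "norm (bsum x (W j') t) < \<delta> / 2" using \<open>\<phi> t \<in> X\<close> \<open>j' \<in> J\<close> unfolding X_def by auto
    qed
  qed
  have disj: "X \<inter> Y = {}"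
  proof (rule ccontr)
    assume "X \<inter> Y \<noteq> {}"
    then obtain t where "t \<in> X" "\<phi> t \<in> X" by (auto simp: Y_def)
    then have a: "norm (bsum x (W j) t) < \<delta>/2" and b: "norm (bsum x (W j) (\<phi> t)) < \<delta>/2"
      unfolding X_def by auto
    have "bsum x (W j) (\<phi> t) - bsum x (W j) t = ((if t (g j) then -1 else 1)::real) *\<^sub>R x (g j)"
      unfolding \<phi>_def by (rule bsum_flip[OF finW gin])
    then have "norm (bsum x (W j) (\<phi> t) - bsum x (W j) t) = norm (x (g j))" by simp
    moreover have "norm (bsum x (W j) (\<phi> t) - bsum x (W j) t) \<le> norm (bsum x (W j) (\<phi> t)) + norm (bsum x (W j) t)"
      by (rule norm_triangle_ineq4)
    ultimately show False using a b big[of j] by linarith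
  qed
  have "measure cantor_measure X + measure cantor_measure Y = measure cantor_measure (X \<union> Y)"
    using P.finite_measure_Union[OF Xs Ys disj] by simp
  also have "\<dots> \<le> measure cantor_measure C"
    using XC YC Cs by (intro P.finite_measure_mono) auto
  finally have "2 * measure cantor_measure X \<le> (1/2)^card J" using mY Cm by linarith
  then have "measure cantor_measure X \<le> (1/2)^card (insert j J)" using insert by simp
  then show ?case using Xs unfolding X_def by simp
qed

lemma ps_split:
  assumes "m \<le> n"
  shows "partial_sums f n = partial_sums f m + sum f {m<..n}"
proof -
  have e: "{..n} = {..m} \<union> {m<..n}" using assms by auto
  show ?thesis unfolding partial_sums_def e by (rule sum.union_disjoint) auto
qed

lemma I_fin:
  assumes I: "is_ideal I" and E: "\<forall>F. F \<subseteq> E \<and> infinite F \<longrightarrow> F \<notin> I"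
    and L: "I_convergent_to I y L" and e: "\<epsilon> > 0"
  shows "\<exists>N. \<forall>m\<in>E. m \<ge> N \<longrightarrow> norm (y m - L) \<le> \<epsilon>"
proof -
  let ?D = "{n. norm (y n - L) > \<epsilon>}"
  have "?D \<in> I" using L e unfolding I_convergent_to_def by auto
  moreover have sub: "\<forall>A\<in>I. \<forall>B. B \<subseteq> A \<longrightarrow> B \<in> I" using I unfolding is_ideal_def by simp
  ultimately have "E \<inter> ?D \<in> I" by (meson Int_lower2)
  then have "finite (E \<inter> ?D)" using E[rule_format, of "E \<inter> ?D"] by auto
  then obtain N where N: "E \<inter> ?D \<subseteq> {..<N}" using finite_nat_bounded by meson
  show ?thesis
  proof (intro exI[of _ N] ballI impI)
    fix m assume "m \<in> E" "N \<le> m"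
    then have "m \<notin> E \<inter> ?D" using N by auto
    then show "norm (y m - L) \<le> \<epsilon>" using \<open>m \<in> E\<close> by auto
  qed
qed

lemma gap_lemma:
  fixes E :: "nat set" and B :: nat
  assumes E: "infinite E" and B: "\<forall>n. enumerate E (Suc n) - enumerate E n \<le> B"
    and n: "n \<ge> enumerate E 0"
  shows "\<exists>m\<in>E. m \<le> n \<and> n < m + B"
proof -
  have B0: "B > 0"
    using B[rule_format, of 0] enumerate_mono[OF _ E, of 0 1] by simp
  have "\<exists>k. enumerate E k \<le> n \<and> n < enumerate E k + B"
    using n
  proof (induction n rule: dec_induct)
    case base
    then show ?case using B0 by (intro exI[of _ 0]) auto
  next
    case (step n)
    then obtain k where k: "enumerate E k \<le> n" "n < enumerate E k + B" by auto
    show ?case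
    proof (cases "Suc n < enumerate E k + B")
      case True then show ?thesis using k by (intro exI[of _ k]) auto
    next
      case False
      then have eq: "Suc n = enumerate E k + B" using k by auto
      have "enumerate E k < enumerate E (Suc k)" using enumerate_mono[OF _ E, of k "Suc k"] by simp
      moreover have "enumerate E (Suc k) \<le> enumerate E k + B" using B[rule_format, of k] by simp
      ultimately show ?thesis using eq by (intro exI[of _ "Suc k"]) auto
    qed
  qed
  then show ?thesis using enumerate_in_set[OF E] by blast
qed

lemma not_small:
  fixes E :: "nat set" and B :: nat and x :: "nat \<Rightarrow> 'a::real_normed_vector"
  assumes I: "is_ideal I" and Eno: "\<forall>F. F \<subseteq> E \<and> infinite F \<longrightarrow> F \<notin> I"
    and E: "infinite E" and B: "\<forall>n. enumerate E (Suc n) - enumerate E n \<le> B"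
    and L: "I_convergent_to I (partial_sums x) L" and nc: "\<not> convergent (partial_sums x)"
  shows "\<exists>\<delta>>0. \<forall>N. \<exists>i\<ge>N. \<delta> \<le> norm (x i)"
proof (rule ccontr)
  assume "\<not> ?thesis"
  then have sm: "\<forall>\<delta>>0. \<exists>N. \<forall>i\<ge>N. norm (x i) < \<delta>" by (meson not_le)
  let ?e0 = "enumerate E 0"
  have B0: "B > 0"
    using B[rule_format, of 0] enumerate_mono[OF _ E, of 0 1] by simp
  have "partial_sums x \<longlonglongrightarrow> L"
  proof (rule LIMSEQ_I)
    fix r :: real assume r: "r > 0"
    obtain N1 where N1: "\<forall>m\<in>E. m \<ge> N1 \<longrightarrow> norm (partial_sums x m - L) \<le> r/4"
      using I_fin[OF I Eno L, of "r/4"] r by auto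
    have "r / (2 * real B) > 0" using r B0 by simp
    then obtain N2 where N2: "\<forall>i\<ge>N2. norm (x i) < r / (2 * real B)" using sm by blast
    show "\<exists>no. \<forall>n\<ge>no. norm (partial_sums x n - L) < r"
    proof (intro exI allI impI)
      fix n assume n: "n \<ge> ?e0 + N1 + N2 + B"
      then obtain m where m: "m \<in> E" "m \<le> n" "n < m + B"
        using gap_lemma[OF E B, of n] by auto
      have mN: "m \<ge> N1" "m \<ge> N2" using m n by auto
      have eq: "partial_sums x n - L = (partial_sums x m - L) + sum x {m<..n}"
        using ps_split[OF m(2), of x] by simp
      have "norm (sum x {m<..n}) \<le> (\<Sum>i\<in>{m<..n}. norm (x i))" by (rule norm_sum)
      also have "\<dots> \<le> (\<Sum>i\<in>{m<..n}. r / (2 * real B))"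
        using N2 mN by (intro sum_mono) (auto intro: less_imp_le)
      also have "\<dots> = real (n - m) * (r / (2 * real B))" by simp
      also have "\<dots> \<le> real B * (r / (2 * real B))"
        using m r B0 by (intro mult_right_mono) auto
      also have "\<dots> = r / 2" using B0 by simp
      finally have "norm (sum x {m<..n}) \<le> r/2" .
      moreover have "norm (partial_sums x m - L) \<le> r/4" using N1 m mN by auto
      moreover have "norm (partial_sums x n - L) \<le> norm (partial_sums x m - L) + norm (sum x {m<..n})"
        unfolding eq by (rule norm_triangle_ineq)
      ultimately show "norm (partial_sums x n - L) < r" using r by linarith
    qed
  qed
  then show False using nc by (auto simp: convergent_def)
qed

theorem theorem4p5:
  fixes I :: "nat set set" and x :: "nat \<Rightarrow> 'a::real_normed_vector"
  assumes "is_ideal I" and "I \<noteq> Fin_ideal"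
    and "\<exists>E::nat set. infinite E \<and>
           (\<forall>F. F \<subseteq> E \<and> infinite F \<longrightarrow> F \<notin> I) \<and>
           (\<exists>B::nat. \<forall>n. enumerate E (Suc n) - enumerate E n \<le> B)"
    and "\<not> convergent (partial_sums x)"
    and "series_I_convergent I x"
  shows "\<exists>N \<in> null_sets cantor_measure. A_set I x \<subseteq> N"
proof -
  interpret P: prob_space cantor_measure by (rule prob_cantor)
  note I = assms(1)
  obtain E :: "nat set" and B :: nat where E: "infinite E" and Eno: "\<forall>F. F \<subseteq> E \<and> infinite F \<longrightarrow> F \<notin> I"
    and B: "\<forall>n. enumerate E (Suc n) - enumerate E n \<le> B"
    using assms(3) by blast
  obtain L where L: "I_convergent_to I (partial_sums x) L"
    using assms(5) unfolding series_I_convergent_def I_convergent_def by blast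
  obtain \<delta> where d0: "\<delta> > 0" and dN: "\<forall>N. \<exists>i\<ge>N. \<delta> \<le> norm (x i)"
    using not_small[OF I Eno E B L assms(4)] by blast
  let ?e0 = "enumerate E 0"
  define h where "h N = (SOME i. i \<ge> N \<and> i \<ge> ?e0 + 1 \<and> \<delta> \<le> norm (x i))" for N
  have h: "h N \<ge> N \<and> h N \<ge> ?e0 + 1 \<and> \<delta> \<le> norm (x (h N))" for N
  proof -
    obtain i where "i \<ge> N + ?e0 + 1" "\<delta> \<le> norm (x i)" using dN by blast
    then have "\<exists>i. i \<ge> N \<and> i \<ge> ?e0 + 1 \<and> \<delta> \<le> norm (x i)" by (intro exI[of _ i]) auto
    then show ?thesis unfolding h_def by (rule someI_ex)
  qed
  define g where "g = rec_nat (h 0) (\<lambda>_ p. h (p + 2*B + 1))"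
  have gS: "g (Suc j) = h (g j + 2*B + 1)" for j by (simp add: g_def)
  have gp: "g j \<ge> ?e0 + 1 \<and> \<delta> \<le> norm (x (g j))" for j
  proof (cases j)
    case 0 then show ?thesis using h[of 0] by (simp add: g_def)
  next
    case (Suc j') then show ?thesis using h[of "g j' + 2*B + 1"] by (simp only: gS)
  qed
  have gsep1: "g (Suc j) \<ge> g j + 2*B + 1" for j using gS h by simp
  have gsep: "j < j' \<Longrightarrow> g j + 2*B + 1 \<le> g j'" for j j'
  proof (induction j')
    case 0 then show ?case by simp
  next
    case (Suc j'')
    show ?case
    proof (cases "j < j''")
      case True then show ?thesis using Suc.IH gsep1[of j''] by simp
    next
      case False then have "j = j''" using Suc.prems by simp
      then show ?thesis using gsep1[of j''] by simp
    qed
  qed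
  have gge: "g j \<ge> j" for j
    by (induction j) (use gsep1 in \<open>auto intro: le_trans[OF _ gsep1]\<close>)
  define lo where "lo i = (SOME m. m \<in> E \<and> m < i \<and> i \<le> m + B)" for i
  define hi where "hi i = (SOME m. m \<in> E \<and> i < m \<and> m \<le> i + B)" for i
  have lo: "lo i \<in> E \<and> lo i < i \<and> i \<le> lo i + B" if ih: "i \<ge> ?e0 + 1" for i
  proof -
    have "?e0 \<le> i - 1" using ih by simp
    then obtain m where "m \<in> E" "m \<le> i - 1" "i - 1 < m + B" using gap_lemma[OF E B, of "i - 1"] by blast
    then have "\<exists>m. m \<in> E \<and> m < i \<and> i \<le> m + B" using ih by (intro exI[of _ m]) auto
    then show ?thesis unfolding lo_def by (rule someI_ex)
  qed
  have hi: "hi i \<in> E \<and> i < hi i \<and> hi i \<le> i + B" if ih: "i \<ge> ?e0 + 1" for i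
  proof -
    have "?e0 \<le> i + B" using ih by simp
    then obtain m where "m \<in> E" "m \<le> i + B" "i + B < m + B" using gap_lemma[OF E B, of "i + B"] by blast
    then have "\<exists>m. m \<in> E \<and> i < m \<and> m \<le> i + B" by (intro exI[of _ m]) auto
    then show ?thesis unfolding hi_def by (rule someI_ex)
  qed
  define W where "W j = {lo (g j)<..hi (g j)}" for j
  have finW: "finite (W j)" for j unfolding W_def by simp
  have gin: "g j \<in> W j" for j
  proof -
    have "lo (g j) < g j" "g j < hi (g j)" using lo[OF gp[THEN conjunct1]] hi[OF gp[THEN conjunct1]] by blast+
    then show ?thesis unfolding W_def by simp
  qed
  have gout: "g j \<notin> W j'" if "j \<noteq> j'" for j j'
  proof (cases "j < j'")
    case True
    have "g j + 2*B + 1 \<le> g j'" by (rule gsep[OF True])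
    moreover have "g j' \<le> lo (g j') + B" using lo[OF gp[THEN conjunct1]] by blast
    ultimately show ?thesis unfolding W_def by auto
  next
    case False
    then have "j' < j" using that by simp
    then have "g j' + 2*B + 1 \<le> g j" by (rule gsep)
    moreover have "hi (g j') \<le> g j' + B" using hi[OF gp[THEN conjunct1]] by blast
    ultimately show ?thesis unfolding W_def by auto
  qed
  have big: "norm (x (g j)) \<ge> \<delta>" for j using gp by blast
  note hv = halving[where W=W and g=g and x=x and \<delta>=\<delta>, OF finW gin gout big]
  define D where "D K = {t. \<forall>j\<in>{K..}. norm (bsum x (W j) t) < \<delta>/2}" for K
  define S where "S K M = {t. \<forall>j\<in>{K..<K+M}. norm (bsum x (W j) t) < \<delta>/2}" for K M
  have Dnull: "D K \<in> null_sets cantor_measure" for K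
  proof -
    have DS: "D K = (\<Inter>M. S K M)"
    proof (intro equalityI subsetI)
      fix t assume "t \<in> D K" then show "t \<in> (\<Inter>M. S K M)" unfolding D_def S_def by auto
    next
      fix t assume t: "t \<in> (\<Inter>M. S K M)"
      show "t \<in> D K" unfolding D_def
      proof (intro CollectI ballI)
        fix j assume "j \<in> {K..}"
        then have "j \<in> {K..<K + Suc j}" by simp
        moreover have "t \<in> S K (Suc j)" using t by blast
        ultimately show "norm (bsum x (W j) t) < \<delta> / 2" unfolding S_def by blast
      qed
    qed
    have Ss: "S K M \<in> sets cantor_measure" for M unfolding S_def using hv[of "{K..<K+M}"] by simp
    have Ds: "D K \<in> sets cantor_measure" unfolding DS
      using Ss sets.top[of cantor_measure] by (intro sets.countable_INT'') auto
    have le: "measure cantor_measure (D K) \<le> (1/2)^M" for M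
    proof -
      have "measure cantor_measure (D K) \<le> measure cantor_measure (S K M)"
        using Ss unfolding DS by (intro P.finite_measure_mono) auto
      also have "\<dots> \<le> (1/2)^M" unfolding S_def using hv[of "{K..<K+M}"] by simp
      finally show ?thesis .
    qed
    have "measure cantor_measure (D K) = 0"
    proof (rule ccontr)
      assume "measure cantor_measure (D K) \<noteq> 0"
      then have "measure cantor_measure (D K) > 0" using measure_nonneg[of cantor_measure "D K"] by linarith
      then obtain M where "(1/2::real)^M < measure cantor_measure (D K)"
        using real_arch_pow_inv[of "measure cantor_measure (D K)" "1/2"] by auto
      then show False using le[of M] by linarith
    qed
    then show ?thesis using Ds by (intro null_setsI) (simp add: P.emeasure_eq_measure)
  qed
  have Nnull: "(\<Union>K. D K) \<in> null_sets cantor_measure"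
    using Dnull by (intro null_sets_UN') auto
  have sub: "A_set I x \<subseteq> (\<Union>K. D K)"
  proof
    fix t assume "t \<in> A_set I x"
    define y where "y n = (if t n then 1 else 0) *\<^sub>R x n" for n
    obtain L' where L': "I_convergent_to I (partial_sums y) L'"
      using \<open>t \<in> A_set I x\<close> unfolding A_set_def series_I_convergent_def I_convergent_def y_def by auto
    obtain N0 where N0: "\<forall>m\<in>E. m \<ge> N0 \<longrightarrow> norm (partial_sums y m - L') \<le> \<delta>/8"
      using I_fin[OF I Eno L', of "\<delta>/8"] d0 by auto
    have "t \<in> D (N0 + B)" unfolding D_def
    proof (intro CollectI ballI)
      fix j assume "j \<in> {N0 + B..}"
      then have j: "j \<ge> N0 + B" by simp
      have lj: "lo (g j) \<in> E \<and> lo (g j) < g j \<and> g j \<le> lo (g j) + B" by (rule lo[OF gp[THEN conjunct1]])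
      have hj: "hi (g j) \<in> E \<and> g j < hi (g j) \<and> hi (g j) \<le> g j + B" by (rule hi[OF gp[THEN conjunct1]])
      have ge: "lo (g j) \<ge> N0" "hi (g j) \<ge> N0" using lj hj j gge[of j] by linarith+
      have a: "norm (partial_sums y (lo (g j)) - L') \<le> \<delta>/8" using N0 lj ge by blast
      have b: "norm (partial_sums y (hi (g j)) - L') \<le> \<delta>/8" using N0 hj ge by blast
      have "bsum x (W j) t = sum y (W j)" unfolding bsum_def y_def by simp
      also have "\<dots> = partial_sums y (hi (g j)) - partial_sums y (lo (g j))"
        using ps_split[of "lo (g j)" "hi (g j)" y] lj hj unfolding W_def by simp
      also have "\<dots> = (partial_sums y (hi (g j)) - L') - (partial_sums y (lo (g j)) - L')" by simp
      finally have "norm (bsum x (W j) t) \<le> norm (partial_sums y (hi (g j)) - L') + norm (partial_sums y (lo (g j)) - L')"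
        using norm_triangle_ineq4 by metis
      then show "norm (bsum x (W j) t) < \<delta> / 2" using a b d0 by linarith
    qed
    then show "t \<in> (\<Union>K. D K)" by blast
  qed
  show ?thesis using Nnull sub by blast
qed

end
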